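(* Let $\bar Z=\frac{1}{\sqrt2}\big(\frac{\partial}{\partial\bar w}-iw\frac{\partial}{\partial s}\big)$ on $\mathbb{C}\times\mathbb{R}\ni(w,s)$. If $p(w,\bar w,s)$ is a homogeneous polynomial of degree $k\ge2$, then there exists a homogeneous polynomial $q(w,\bar w,s)$ of degree $k+1$ such that $\bar Zq=p$ and $|\mathrm{Re}\,q(w,\bar w,s)|\le C|w|^2(|w|+|s|)$ for $|w|+|s|^{1/2}\le1$. Furthermore, the coefficients of $q$ are linear combinations of the coefficients of $p$.
   Context: A polynomial in $w,\bar w,s$ is homogeneous of degree $k$ if it is a linear combination of monomials $\bar w^\alpha w^\beta s^\gamma$ with $\alpha+\beta+2\gamma=k$. *)

theory Defs
  imports Complex_Main
begin

text \<open>A polynomial in w, conj w, s (complex coefficients) is represented by its coefficient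
  function c, where c a b g is the coefficient of the monomial (conj w)^a * w^b * s^g.\<close>

type_synonym cpoly = "nat \<Rightarrow> nat \<Rightarrow> nat \<Rightarrow> complex"

definition homog :: "nat \<Rightarrow> cpoly \<Rightarrow> bool" where
  "homog k c \<longleftrightarrow> (\<forall>a b g. c a b g \<noteq> 0 \<longrightarrow> a + b + 2 * g = k)"

text \<open>Evaluation of a polynomial all of whose monomials have exponents at most n
  (in particular of a homogeneous polynomial of degree n) at (w, s) in C x R.\<close>
definition peval :: "nat \<Rightarrow> cpoly \<Rightarrow> complex \<Rightarrow> real \<Rightarrow> complex" where
  "peval n c w s = (\<Sum>a\<le>n. \<Sum>b\<le>n. \<Sum>g\<le>n. c a b g * cnj w ^ a * w ^ b * complex_of_real s ^ g)"

text \<open>The operator Zbar = (1/sqrt 2)(d/d(conj w) - i w d/ds) acting on polynomials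
  (coefficientwise): d/d(conj w) sends (conj w)^(a+1) w^b s^g to (a+1) (conj w)^a w^b s^g, and
  -i w d/ds sends (conj w)^a w^(b-1) s^(g+1) to -i (g+1) (conj w)^a w^b s^g.\<close>
definition Zbar :: "cpoly \<Rightarrow> cpoly" where
  "Zbar c = (\<lambda>a b g. (of_nat (a + 1) * c (a + 1) b g
      - (if b \<ge> 1 then \<i> * of_nat (g + 1) * c a (b - 1) (g + 1) else 0))
      / complex_of_real (sqrt 2))"

end

theory Submission
  imports Defs
begin

fun Qf :: "nat \<Rightarrow> cpoly \<Rightarrow> nat \<Rightarrow> nat \<Rightarrow> nat \<Rightarrow> complex" where
  "Qf k p 0 b g = (if b = 1 \<and> 2 * g = k then - cnj (complex_of_real (sqrt 2) * p 0 0 g) else 0)"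
| "Qf k p (Suc a) b g = (complex_of_real (sqrt 2) * p a b g
      + (if b \<ge> 1 then \<i> * of_nat (g + 1) * Qf k p a (b - 1) (g + 1) else 0)) / of_nat (a + 1)"

lemma Qf_add: "Qf k (\<lambda>a b g. p a b g + q a b g) a b g = Qf k p a b g + Qf k q a b g"
  by (induction a arbitrary: b g) (auto simp: algebra_simps add_divide_distrib)

lemma Qf_scale: "Qf k (\<lambda>a b g. complex_of_real r * p a b g) a b g = complex_of_real r * Qf k p a b g"
  by (induction a arbitrary: b g) (auto simp: algebra_simps)

lemma Qf_homog: "homog k p \<Longrightarrow> Qf k p a b g \<noteq> 0 \<Longrightarrow> a + b + 2 * g = k + 1"
proof (induction a arbitrary: b g)
  case 0 then show ?case by (auto split: if_splits)
next
  case (Suc a)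
  show ?case
  proof (cases "p a b g = 0")
    case True
    with Suc.prems have "b \<ge> 1" "Qf k p a (b - 1) (g + 1) \<noteq> 0" by (auto split: if_splits)
    with Suc.IH[of "b - 1" "g + 1"] Suc.prems show ?thesis by auto
  next
    case False
    with Suc.prems show ?thesis unfolding homog_def by auto
  qed
qed

lemma Qf_Zbar: "Zbar (Qf k p) = p"
proof (intro ext)
  fix a b g
  have s: "complex_of_real (sqrt 2) \<noteq> 0" by simp
  have n: "(of_nat (a + 1) :: complex) \<noteq> 0" by (metis of_nat_eq_0_iff add_eq_0_iff_both_eq_0 one_neq_zero)
  show "Zbar (Qf k p) a b g = p a b g"
    unfolding Zbar_def using s n by (simp del: of_nat_Suc of_nat_add)
qed

lemma mono_bound:
  fixes x y :: real
  assumes "0 \<le> x" "x \<le> 1" "0 \<le> y" "y \<le> 1" "2 \<le> a + b" "a + b + 2 * g = n" "3 \<le> n"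
  shows "x ^ (a + b) * y ^ g \<le> x\<^sup>2 * (x + y)"
proof (cases "a + b \<ge> 3")
  case True
  have "x ^ (a + b) \<le> x ^ 3" using True assms by (intro power_decreasing) auto
  moreover have "y ^ g \<le> 1" using assms by (simp add: power_le_one)
  ultimately have "x ^ (a + b) * y ^ g \<le> x ^ 3 * 1"
    by (intro mult_mono) (auto simp: assms)
  also have "\<dots> \<le> x\<^sup>2 * (x + y)" using assms by (simp add: power3_eq_cube power2_eq_square algebra_simps)
  finally show ?thesis .
next
  case False
  then have ab: "a + b = 2" using assms by auto
  then have "g \<ge> 1" using assms by auto
  then have "y ^ g \<le> y ^ 1" using assms by (intro power_decreasing) auto
  then have "x ^ (a + b) * y ^ g \<le> x\<^sup>2 * y" using ab assms by (simp add: mult_left_mono)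
  also have "\<dots> \<le> x\<^sup>2 * (x + y)" using assms by (simp add: mult_left_mono)
  finally show ?thesis .
qed

lemma low_sum:
  fixes f :: "nat \<Rightarrow> nat \<Rightarrow> complex"
  assumes "1 \<le> n"
  shows "(\<Sum>a\<le>n. \<Sum>b\<le>n. (if a + b < 2 then f a b else 0)) = f 0 0 + f 0 1 + f 1 0"
proof -
  obtain m where m: "n = Suc m" using assms by (cases n) auto
  have "(\<Sum>b\<le>Suc m. (if 0 + b < 2 then f 0 b else 0)) = f 0 0 + f 0 1"
    by (cases m) (simp_all only: sum.atMost_Suc_shift, simp_all)
  moreover have "(\<Sum>a\<le>m. \<Sum>b\<le>Suc m. (if Suc a + b < 2 then f (Suc a) b else 0)) = f 1 0"
    by (cases m) (simp_all only: sum.atMost_Suc_shift, simp_all)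
  ultimately show ?thesis unfolding m by (subst sum.atMost_Suc_shift) (simp add: add.assoc)
qed

lemma norm_sum3:
  fixes H :: "nat \<Rightarrow> nat \<Rightarrow> nat \<Rightarrow> complex"
  shows "cmod (\<Sum>a\<in>A. \<Sum>b\<in>B. \<Sum>g\<in>G. H a b g) \<le> (\<Sum>a\<in>A. \<Sum>b\<in>B. \<Sum>g\<in>G. cmod (H a b g))"
proof -
  have "cmod (\<Sum>a\<in>A. \<Sum>b\<in>B. \<Sum>g\<in>G. H a b g) \<le> (\<Sum>a\<in>A. cmod (\<Sum>b\<in>B. \<Sum>g\<in>G. H a b g))"
    by (rule norm_sum)
  also have "\<dots> \<le> (\<Sum>a\<in>A. \<Sum>b\<in>B. cmod (\<Sum>g\<in>G. H a b g))"
    by (intro sum_mono norm_sum)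
  also have "\<dots> \<le> (\<Sum>a\<in>A. \<Sum>b\<in>B. \<Sum>g\<in>G. cmod (H a b g))"
    by (intro sum_mono norm_sum)
  finally show ?thesis .
qed

lemma re_bound:
  fixes c :: cpoly
  assumes h: "homog n c" and n3: "3 \<le> n" and c00: "\<And>g. c 0 0 g = 0"
    and c01: "\<And>g. c 0 1 g = - cnj (c 1 0 g)"
  shows "\<exists>C::real. \<forall>(w::complex) (s::real). cmod w + sqrt \<bar>s\<bar> \<le> 1 \<longrightarrow>
          \<bar>Re (peval n c w s)\<bar> \<le> C * (cmod w)\<^sup>2 * (cmod w + \<bar>s\<bar>)"
proof (intro exI allI impI)
  fix w :: complex and s :: real
  assume ws: "cmod w + sqrt \<bar>s\<bar> \<le> 1"
  have sq: "sqrt \<bar>s\<bar> \<le> 1" using ws norm_ge_zero[of w] by linarith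
  then have s1: "\<bar>s\<bar> \<le> 1" by simp
  have w1: "cmod w \<le> 1" using ws real_sqrt_ge_zero[of "\<bar>s\<bar>"] by linarith
  define T where "T a b g = c a b g * cnj w ^ a * w ^ b * complex_of_real s ^ g" for a b g
  define H where "H a b g = (if a + b < 2 then 0 else T a b g)" for a b g
  define Lo where "Lo a b g = (if a + b < 2 then T a b g else 0)" for a b g
  have TS: "T a b g = H a b g + Lo a b g" for a b g unfolding H_def Lo_def by simp
  have pe: "peval n c w s = (\<Sum>a\<le>n. \<Sum>b\<le>n. \<Sum>g\<le>n. H a b g) + (\<Sum>a\<le>n. \<Sum>b\<le>n. \<Sum>g\<le>n. Lo a b g)"
    unfolding peval_def T_def[symmetric] TS by (simp add: sum.distrib)
  have "(\<Sum>a\<le>n. \<Sum>b\<le>n. \<Sum>g\<le>n. Lo a b g) = (\<Sum>a\<le>n. \<Sum>g\<le>n. \<Sum>b\<le>n. Lo a b g)"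
    by (rule sum.cong[OF refl], rule sum.swap)
  also have "\<dots> = (\<Sum>g\<le>n. \<Sum>a\<le>n. \<Sum>b\<le>n. Lo a b g)" by (rule sum.swap)
  also have "\<dots> = (\<Sum>g\<le>n. T 0 0 g + T 0 1 g + T 1 0 g)"
    unfolding Lo_def using n3 by (intro sum.cong refl low_sum) auto
  finally have lo: "(\<Sum>a\<le>n. \<Sum>b\<le>n. \<Sum>g\<le>n. Lo a b g) = (\<Sum>g\<le>n. T 0 0 g + T 0 1 g + T 1 0 g)" .
  have relo: "Re (T 0 0 g + T 0 1 g + T 1 0 g) = 0" for g
  proof -
    have "T 0 0 g + T 0 1 g + T 1 0 g = complex_of_real (s ^ g) * (c 1 0 g * cnj w - cnj (c 1 0 g * cnj w))"
      unfolding T_def c00 c01 by (simp add: algebra_simps)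
    then show ?thesis by simp
  qed
  have "Re (\<Sum>a\<le>n. \<Sum>b\<le>n. \<Sum>g\<le>n. Lo a b g) = 0" unfolding lo Re_sum using relo by simp
  then have "Re (peval n c w s) = Re (\<Sum>a\<le>n. \<Sum>b\<le>n. \<Sum>g\<le>n. H a b g)" unfolding pe by simp
  also have "\<bar>\<dots>\<bar> \<le> cmod (\<Sum>a\<le>n. \<Sum>b\<le>n. \<Sum>g\<le>n. H a b g)" by (rule abs_Re_le_cmod)
  also have "\<dots> \<le> (\<Sum>a\<le>n. \<Sum>b\<le>n. \<Sum>g\<le>n. cmod (H a b g))"
    by (rule norm_sum3)
  also have "\<dots> \<le> (\<Sum>a\<le>n. \<Sum>b\<le>n. \<Sum>g\<le>n. cmod (c a b g) * ((cmod w)\<^sup>2 * (cmod w + \<bar>s\<bar>)))"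
  proof (intro sum_mono)
    fix a b g
    show "cmod (H a b g) \<le> cmod (c a b g) * ((cmod w)\<^sup>2 * (cmod w + \<bar>s\<bar>))"
    proof (cases "a + b < 2 \<or> c a b g = 0")
      case True then show ?thesis unfolding H_def T_def by auto
    next
      case False
      then have e: "a + b + 2 * g = n" using h unfolding homog_def by auto
      have "cmod (H a b g) = cmod (c a b g) * (cmod w ^ (a + b) * \<bar>s\<bar> ^ g)"
        using False unfolding H_def T_def by (simp add: norm_mult norm_power power_add)
      also have "\<dots> \<le> cmod (c a b g) * ((cmod w)\<^sup>2 * (cmod w + \<bar>s\<bar>))"
        using False e n3 w1 s1 by (intro mult_left_mono mono_bound[where n=n]) auto
      finally show ?thesis .
    qed
  qed
  also have "\<dots> = (\<Sum>a\<le>n. \<Sum>b\<le>n. \<Sum>g\<le>n. cmod (c a b g)) * (cmod w)\<^sup>2 * (cmod w + \<bar>s\<bar>)"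
    by (simp add: sum_distrib_right mult.assoc)
  finally show "\<bar>Re (peval n c w s)\<bar> \<le> (\<Sum>a\<le>n. \<Sum>b\<le>n. \<Sum>g\<le>n. cmod (c a b g)) * (cmod w)\<^sup>2 * (cmod w + \<bar>s\<bar>)" .
qed

theorem lemma8p3:
  fixes k :: nat
  assumes "k \<ge> 2"
  shows "\<exists>L :: cpoly \<Rightarrow> cpoly.
    (\<forall>p q. L (\<lambda>a b g. p a b g + q a b g) = (\<lambda>a b g. L p a b g + L q a b g)) \<and>
    (\<forall>(r::real) p. L (\<lambda>a b g. complex_of_real r * p a b g)
                    = (\<lambda>a b g. complex_of_real r * L p a b g)) \<and>
    (\<forall>p. homog k p \<longrightarrow>
       homog (k + 1) (L p) \<and> Zbar (L p) = p \<and>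
       (\<exists>C::real. \<forall>(w::complex) (s::real). cmod w + sqrt \<bar>s\<bar> \<le> 1 \<longrightarrow>
          \<bar>Re (peval (k + 1) (L p) w s)\<bar> \<le> C * (cmod w)\<^sup>2 * (cmod w + \<bar>s\<bar>)))"
proof (intro exI[of _ "Qf k"] conjI allI impI)
  fix p q show "Qf k (\<lambda>a b g. p a b g + q a b g) = (\<lambda>a b g. Qf k p a b g + Qf k q a b g)"
    by (intro ext Qf_add)
next
  fix r p show "Qf k (\<lambda>a b g. complex_of_real r * p a b g) = (\<lambda>a b g. complex_of_real r * Qf k p a b g)"
    by (intro ext Qf_scale)
next
  fix p assume hp: "homog k p"
  show "homog (k + 1) (Qf k p)" unfolding homog_def using Qf_homog[OF hp] by blast
  show "Zbar (Qf k p) = p" by (rule Qf_Zbar)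
  show "\<exists>C::real. \<forall>(w::complex) (s::real). cmod w + sqrt \<bar>s\<bar> \<le> 1 \<longrightarrow>
          \<bar>Re (peval (k + 1) (Qf k p) w s)\<bar> \<le> C * (cmod w)\<^sup>2 * (cmod w + \<bar>s\<bar>)"
  proof (rule re_bound)
    show "homog (k + 1) (Qf k p)" unfolding homog_def using Qf_homog[OF hp] by blast
    show "3 \<le> k + 1" using assms by simp
    show "Qf k p 0 0 g = 0" for g by simp
    show "Qf k p 0 1 g = - cnj (Qf k p 1 0 g)" for g
    proof (cases "2 * g = k")
      case False
      then have "p 0 0 g = 0" using hp[unfolded homog_def, rule_format, of 0 0 g] by auto
      then show ?thesis using False by simp
    qed simp
  qed
qed

end
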